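(* Consider a single flow on a route of $n$ links $\mathcal{T}_0,\dots,\mathcal{T}_{n-1}$ (a line network) under the $\phi$-hop interference model, $0\le\phi\le n-1$. The Ordered Round-Robin policy $ORR$ is deadline-optimal among all admissible cyclic policies, its maximum packet delay is \[ \tau^*(ORR)=n+\phi, \] and its activation rates are $\bar{\mu}^{ORR}_e=\frac{1}{\phi+1}$ for every link $e$ of the route.
   Context: Time is slotted. Under $\phi$-hop interference on the line, distinct links $\mathcal{T}_j,\mathcal{T}_{j'}$ cannot be active in the same slot if $|j-j'|\le\phi$. Each link $\mathcal{T}_j$ has a slice of width $w_j$ for the flow, with a FCFS queue; the flow has deterministic fluid arrival rate $\lambda>0$ per slot at the source. Units arriving in slot $t$ are available for service at the first link from slot $t+1$; an activated link serves $\min\{Q,w_j\}$ from its queue of size $Q$, and units served at a link in slot $t$ are available at the next link from slot $t+1$; a packet's delay is $t_d-t_a$, where $t_a$ is its arrival slot and $t_d$ the slot in which it is served at the last link. Policies are admissible (respect interference, work-conserving) and cyclic: $\mu^\pi(t)=\mu^\pi(t+K^\pi)$ for all $t\ge0$; $\bar{\mu}^\pi_e=\frac1{K^\pi}\sum_{t=0}^{K^\pi-1}\mu^\pi_e(t)$. For a policy $\pi$, $\tau^*(\pi,\boldsymbol{w},\lambda)$ is the maximum delay seen by any packet (equivalently the minimum deadline met by all packets) and $\tau^*(\pi)=\lim_{\lambda\to 0}\tau^*(\pi,\boldsymbol{w},\lambda)$. A cyclic admissible policy $\pi$ is deadline-optimal if $\tau^*(\pi)\le\tau^*(\pi')$ for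 all cyclic admissible $\pi'$. The $ORR$ policy has period $\phi+1$: in slot $t$ it activates every link $\mathcal{T}_j$ with $j\equiv t \pmod{\phi+1}$. *)

theory Defs
  imports "HOL-Analysis.Analysis"
begin

text \<open>Line network with links 0..n-1. A schedule mu t j says link j is activated in slot t.\<close>

definition admissible :: "nat \<Rightarrow> nat \<Rightarrow> (nat \<Rightarrow> nat \<Rightarrow> bool) \<Rightarrow> bool" where
  "admissible n phi mu \<longleftrightarrow>
     (\<forall>t j. mu t j \<longrightarrow> j < n) \<and>
     (\<forall>t j j'. j < n \<longrightarrow> j' < n \<longrightarrow> j \<noteq> j' \<longrightarrow>
        (j \<le> j' + phi \<and> j' \<le> j + phi) \<longrightarrow> \<not> (mu t j \<and> mu t j'))"

definition cyclic :: "(nat \<Rightarrow> nat \<Rightarrow> bool) \<Rightarrow> nat \<Rightarrow> bool" where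
  "cyclic mu K \<longleftrightarrow> K > 0 \<and> (\<forall>t. mu (t + K) = mu t)"

definition ORR :: "nat \<Rightarrow> nat \<Rightarrow> nat \<Rightarrow> nat \<Rightarrow> bool" where
  "ORR n phi t j \<longleftrightarrow> j < n \<and> j mod (phi + 1) = t mod (phi + 1)"

definition rate :: "(nat \<Rightarrow> nat \<Rightarrow> bool) \<Rightarrow> nat \<Rightarrow> nat \<Rightarrow> real" where
  "rate mu K e = (\<Sum>t<K. if mu t e then 1 else 0) / real K"

text \<open>cum mu w lam j t: cumulative fluid amount served by link j in slots 0..t-1.
  The input available to link 0 at slot t is lam*t (arrivals of slots < t);
  the input available to link j+1 at slot t is what link j served in slots < t.\<close>
fun cum :: "(nat \<Rightarrow> nat \<Rightarrow> bool) \<Rightarrow> (nat \<Rightarrow> real) \<Rightarrow> real \<Rightarrow> nat \<Rightarrow> nat \<Rightarrow> real" where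
  "cum mu w lam j 0 = 0"
| "cum mu w lam j (Suc t) = cum mu w lam j t +
     (if mu t j then
        min ((if j = 0 then lam * real t else cum mu w lam (j - 1) t) - cum mu w lam j t) (w j)
      else 0)"

text \<open>Delay of the fluid particle at cumulative position x >= 0 (FCFS): it arrives in slot
  floor(x/lam) and is served at the last link in the first slot t with x < cum (n-1) (t+1).\<close>
definition delay :: "nat \<Rightarrow> (nat \<Rightarrow> nat \<Rightarrow> bool) \<Rightarrow> (nat \<Rightarrow> real) \<Rightarrow> real \<Rightarrow> real \<Rightarrow> ereal" where
  "delay n mu w lam x =
     (if \<exists>t. x < cum mu w lam (n - 1) (Suc t)
      then ereal (real (LEAST t. x < cum mu w lam (n - 1) (Suc t)) - real (nat \<lfloor>x / lam\<rfloor>))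
      else \<infinity>)"

definition tau_lam :: "nat \<Rightarrow> (nat \<Rightarrow> nat \<Rightarrow> bool) \<Rightarrow> (nat \<Rightarrow> real) \<Rightarrow> real \<Rightarrow> ereal" where
  "tau_lam n mu w lam = (SUP x\<in>{0..}. delay n mu w lam x)"

definition tau_star :: "nat \<Rightarrow> (nat \<Rightarrow> nat \<Rightarrow> bool) \<Rightarrow> (nat \<Rightarrow> real) \<Rightarrow> ereal" where
  "tau_star n mu w = Lim (at_right 0) (tau_lam n mu w)"

definition deadline_optimal :: "nat \<Rightarrow> nat \<Rightarrow> (nat \<Rightarrow> real) \<Rightarrow> (nat \<Rightarrow> nat \<Rightarrow> bool) \<Rightarrow> bool" where
  "deadline_optimal n phi w mu \<longleftrightarrow>
     (\<forall>mu' K'. admissible n phi mu' \<and> cyclic mu' K' \<longrightarrow> tau_star n mu w \<le> tau_star n mu' w)"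

end

theory Submission imports Defs begin

fun G :: "(nat \<Rightarrow> nat \<Rightarrow> bool) \<Rightarrow> nat \<Rightarrow> nat \<Rightarrow> nat" where
  "G mu j 0 = 0"
| "G mu j (Suc t) = (if mu t j then (if j = 0 then t else G mu (j - 1) t) else G mu j t)"

definition inp :: "(nat \<Rightarrow> nat \<Rightarrow> bool) \<Rightarrow> nat \<Rightarrow> nat \<Rightarrow> nat" where
  "inp mu j t = (if j = 0 then t else G mu (j - 1) t)"

lemma G_Suc': "G mu j (Suc t) = (if mu t j then inp mu j t else G mu j t)"
  by (simp add: inp_def)

declare G.simps(2)[simp del]

lemma G_le_inp: "\<forall>j. G mu j t \<le> inp mu j t"
proof (induction t)
  case 0 then show ?case by (simp add: inp_def)
next
  case (Suc t)
  have m: "inp mu j t \<le> inp mu j (Suc t)" for j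
  proof (cases "j = 0")
    case True then show ?thesis by (simp add: inp_def)
  next
    case False
    then show ?thesis using Suc[rule_format, of "j - 1"] by (auto simp: inp_def G_Suc')
  qed
  show ?case
  proof
    fix j show "G mu j (Suc t) \<le> inp mu j (Suc t)"
      using Suc[rule_format, of j] m[of j] by (auto simp: G_Suc')
  qed
qed

lemma G_mono_Suc: "G mu j t \<le> G mu j (Suc t)"
  using G_le_inp[of mu t] by (auto simp: G_Suc')

lemma G_mono: "t \<le> t' \<Longrightarrow> G mu j t \<le> G mu j t'"
  using G_mono_Suc by (metis lift_Suc_mono_le)

lemma inp_mono: "t \<le> t' \<Longrightarrow> inp mu j t \<le> inp mu j t'"
  by (auto simp: inp_def G_mono)

lemma G_le_t: "G mu j t \<le> t"
proof (induction j)
  case 0 then show ?case using G_le_inp[of mu t] by (metis inp_def)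
next
  case (Suc j) then show ?case using G_le_inp[of mu t, rule_format, of "Suc j"] by (simp add: inp_def)
qed

lemma inp_le_t: "inp mu j t \<le> t"
  by (simp add: inp_def G_le_t)

lemma G_char: "s < G mu j t \<longleftrightarrow> (\<exists>t'<t. mu t' j \<and> s < inp mu j t')"
proof (induction t)
  case 0 then show ?case by simp
next
  case (Suc t)
  show ?case
  proof (cases "mu t j")
    case True
    have "(\<exists>t'<Suc t. mu t' j \<and> s < inp mu j t') \<longleftrightarrow> s < inp mu j t"
      using inp_mono[of _ t mu j] True less_Suc_eq_le order.strict_trans2 by blast
    then show ?thesis using True by (simp add: G_Suc')
  next
    case False
    then show ?thesis using Suc by (auto simp: G_Suc' less_Suc_eq)
  qed
qed

definition nxt :: "(nat \<Rightarrow> nat \<Rightarrow> bool) \<Rightarrow> nat \<Rightarrow> nat \<Rightarrow> nat" where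
  "nxt mu j u = (LEAST t. mu t j \<and> u < t)"

definition win :: "(nat \<Rightarrow> nat \<Rightarrow> bool) \<Rightarrow> nat \<Rightarrow> nat \<Rightarrow> bool" where
  "win mu K j \<longleftrightarrow> (\<forall>t. \<exists>s. t \<le> s \<and> s < t + K \<and> mu s j)"

lemma nxt_le: "mu t j \<Longrightarrow> u < t \<Longrightarrow> nxt mu j u \<le> t"
  unfolding nxt_def by (rule Least_le) simp

lemma nxt_props:
  assumes "win mu K j"
  shows "mu (nxt mu j u) j \<and> u < nxt mu j u \<and> nxt mu j u \<le> u + K"
proof -
  obtain s where s: "Suc u \<le> s" "s < Suc u + K" "mu s j" using assms unfolding win_def by blast
  have "mu (nxt mu j u) j \<and> u < nxt mu j u"
    unfolding nxt_def by (rule LeastI[of _ s]) (use s in auto)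
  moreover have "nxt mu j u \<le> s" using s by (intro nxt_le) auto
  ultimately show ?thesis using s by auto
qed

lemma nxt_mono: "win mu K j \<Longrightarrow> u \<le> u' \<Longrightarrow> nxt mu j u \<le> nxt mu j u'"
  using nxt_props[of mu K j u'] by (intro nxt_le) auto

fun E :: "(nat \<Rightarrow> nat \<Rightarrow> bool) \<Rightarrow> nat \<Rightarrow> nat \<Rightarrow> nat" where
  "E mu 0 s = nxt mu 0 s"
| "E mu (Suc j) s = nxt mu (Suc j) (E mu j s)"

lemma G_E:
  assumes W: "\<forall>j<n. win mu K j" and "j < n"
  shows "s < G mu j t \<longleftrightarrow> E mu j s < t"
  using assms(2)
proof (induction j arbitrary: t)
  case 0
  have w: "win mu K 0" using W 0 by auto
  show ?case
    unfolding G_char inp_def using nxt_props[OF w, of s] nxt_le[of mu _ 0 s]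
    by (auto intro: le_less_trans)
next
  case (Suc i)
  have w: "win mu K (Suc i)" using W Suc by auto
  have IH: "s < G mu i t' \<longleftrightarrow> E mu i s < t'" for t' using Suc by auto
  show ?case
    unfolding G_char inp_def using nxt_props[OF w, of "E mu i s"] nxt_le[of mu _ "Suc i" "E mu i s"]
    by (auto simp: IH intro: le_less_trans)
qed


lemma E_bound:
  assumes W: "\<forall>j<n. win mu K j" and "j < n"
  shows "s < E mu j s \<and> E mu j s \<le> s + (j + 1) * K"
  using assms(2)
proof (induction j)
  case 0 then show ?case using nxt_props[of mu K 0 s] W by auto
next
  case (Suc i)
  then have w: "win mu K (Suc i)" using W by auto
  show ?case using nxt_props[OF w, of "E mu i s"] Suc by auto
qed

lemma G_lower:
  assumes W: "\<forall>j<n. win mu K j" and "j < n"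
  shows "t \<le> G mu j t + (j + 1) * K"
proof (cases "t \<le> (j + 1) * K")
  case True then show ?thesis by simp
next
  case False
  define s where "s = t - (j + 1) * K - 1"
  have "E mu j s < t" using E_bound[OF assms, of s] False unfolding s_def by linarith
  then have "s < G mu j t" using G_E[OF assms] by blast
  then show ?thesis using False unfolding s_def by linarith
qed

lemma cum_G:
  assumes W: "\<forall>j<n. win mu K j" and wb: "\<forall>j<n. lam * real (n * K) \<le> w j" and lam: "lam > 0"
  shows "\<forall>j<n. cum mu w lam j t = lam * real (G mu j t)"
proof (induction t)
  case 0 then show ?case by simp
next
  case (Suc t)
  show ?case
  proof (intro allI impI)
    fix j assume j: "j < n"
    show "cum mu w lam j (Suc t) = lam * real (G mu j (Suc t))"
    proof (cases "mu t j")
      case False then show ?thesis using Suc j by (simp add: G_Suc')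
    next
      case True
      have I: "(if j = 0 then lam * real t else cum mu w lam (j - 1) t) = lam * real (inp mu j t)"
        using Suc j by (auto simp: inp_def)
      have c: "cum mu w lam j t = lam * real (G mu j t)" using Suc j by auto
      have le1: "G mu j t \<le> inp mu j t" using G_le_inp by blast
      have "inp mu j t \<le> G mu j t + n * K"
      proof -
        have "inp mu j t \<le> t" by (rule inp_le_t)
        also have "t \<le> G mu j t + (j + 1) * K" by (rule G_lower[OF W j])
        also have "(j + 1) * K \<le> n * K" using j by (intro mult_right_mono) auto
        finally show ?thesis by simp
      qed
      then have "real (inp mu j t) - real (G mu j t) \<le> real (n * K)" by linarith
      then have "lam * (real (inp mu j t) - real (G mu j t)) \<le> lam * real (n * K)"
        using lam by (intro mult_left_mono) auto
      also have "\<dots> \<le> w j" using wb j by auto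
      finally have m: "min (lam * real (inp mu j t) - lam * real (G mu j t)) (w j)
          = lam * real (inp mu j t) - lam * real (G mu j t)"
        by (simp add: right_diff_distrib)
      show ?thesis using True by (simp add: I c m G_Suc')
    qed
  qed
qed

lemma periodic: "cyclic mu K \<Longrightarrow> mu (t + m * K) = mu t"
proof (induction m)
  case (Suc m)
  assume c: "cyclic mu K"
  have "mu (t + Suc m * K) = mu ((t + m * K) + K)" by (simp add: algebra_simps)
  also have "\<dots> = mu (t + m * K)" using c by (simp add: cyclic_def)
  finally show ?case using Suc c by simp
qed simp

lemma win_from_cyclic:
  assumes c: "cyclic mu K" and s0: "s0 < K" "mu s0 j"
  shows "win mu K j"
  unfolding win_def
proof
  fix t
  define q r where "q = t div K" and "r = t mod K"
  have t: "t = r + q * K" unfolding q_def r_def by simp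
  have rK: "r < K" using c unfolding r_def cyclic_def by simp
  show "\<exists>s\<ge>t. s < t + K \<and> mu s j"
  proof (cases "r \<le> s0")
    case True
    show ?thesis
      by (rule exI[of _ "s0 + q * K"]) (use True s0 t periodic[OF c, of s0 q] in auto)
  next
    case False
    show ?thesis
      by (rule exI[of _ "s0 + (q + 1) * K"]) (use False s0 t rK periodic[OF c, of s0 "q+1"] in auto)
  qed
qed

lemma never_from_cyclic:
  assumes c: "cyclic mu K" and "\<forall>t<K. \<not> mu t j"
  shows "\<not> mu t j"
proof -
  have "t = t mod K + (t div K) * K" by simp
  then have "mu t = mu (t mod K)" using periodic[OF c, of "t mod K" "t div K"] by metis
  moreover have "t mod K < K" using c by (simp add: cyclic_def)
  ultimately show ?thesis using assms(2) by simp
qed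

lemma cum_zero:
  assumes nv: "\<forall>t. \<not> mu t j0" and wp: "\<forall>j<n. w j > 0" and "j0 + d < n"
  shows "cum mu w lam (j0 + d) t = 0"
  using assms(3)
proof (induction d arbitrary: t)
  case 0
  show ?case by (induction t) (use nv in auto)
next
  case (Suc d)
  have IH: "cum mu w lam (j0 + d) t' = 0" for t' using Suc by auto
  have wpos: "w (j0 + Suc d) > 0" using wp Suc by auto
  show ?case by (induction t) (use IH wpos in auto)
qed


declare cum.simps(2)[simp del]

lemma floor_lem:
  assumes "x \<ge> 0" "lam > 0"
  shows "x < lam * real k \<longleftrightarrow> nat \<lfloor>x / lam\<rfloor> < k"
proof -
  have "x < lam * real k \<longleftrightarrow> x / lam < real k" using assms by (simp add: pos_divide_less_eq mult.commute)
  also have "\<dots> \<longleftrightarrow> \<lfloor>x / lam\<rfloor> < int k" by (simp add: floor_less_iff)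
  also have "\<dots> \<longleftrightarrow> nat \<lfloor>x / lam\<rfloor> < k" using assms by (simp add: nat_less_iff)
  finally show ?thesis .
qed

definition DD :: "nat \<Rightarrow> (nat \<Rightarrow> nat \<Rightarrow> bool) \<Rightarrow> nat \<Rightarrow> ereal" where
  "DD n mu s = ereal (real (E mu (n - 1) s) - real s)"

lemma delay_G:
  assumes W: "\<forall>j<n. win mu K j" and wb: "\<forall>j<n. lam * real (n * K) \<le> w j" and lam: "lam > 0"
    and n: "n \<ge> 1" and x: "x \<ge> 0"
  shows "delay n mu w lam x = DD n mu (nat \<lfloor>x / lam\<rfloor>)"
proof -
  define s where "s = nat \<lfloor>x / lam\<rfloor>"
  have n1: "n - 1 < n" using n by simp
  have key: "x < cum mu w lam (n - 1) (Suc t) \<longleftrightarrow> E mu (n - 1) s \<le> t" for t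
  proof -
    have "x < cum mu w lam (n - 1) (Suc t) \<longleftrightarrow> x < lam * real (G mu (n - 1) (Suc t))"
      using cum_G[OF W wb lam, rule_format, OF n1, of "Suc t"] by (simp only:)
    also have "\<dots> \<longleftrightarrow> s < G mu (n - 1) (Suc t)" unfolding s_def by (rule floor_lem[OF x lam])
    also have "\<dots> \<longleftrightarrow> E mu (n - 1) s < Suc t" by (rule G_E[OF W n1])
    finally show ?thesis by (simp only: less_Suc_eq_le)
  qed
  have ex: "\<exists>t. x < cum mu w lam (n - 1) (Suc t)" using key by blast
  have L: "(LEAST t. x < cum mu w lam (n - 1) (Suc t)) = E mu (n - 1) s"
    by (rule Least_equality) (simp_all only: key le_refl)
  show ?thesis unfolding delay_def using ex L by (simp add: DD_def s_def)
qed

lemma tau_lam_eq: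
  assumes W: "\<forall>j<n. win mu K j" and wb: "\<forall>j<n. lam * real (n * K) \<le> w j" and lam: "lam > 0"
    and n: "n \<ge> 1"
  shows "tau_lam n mu w lam = (SUP s. DD n mu s)"
proof -
  have "tau_lam n mu w lam = (SUP x\<in>{0..}. DD n mu (nat \<lfloor>x / lam\<rfloor>))"
    unfolding tau_lam_def using delay_G[OF W wb lam n] by (intro SUP_cong) auto
  also have "\<dots> = Sup (DD n mu ` ((\<lambda>x. nat \<lfloor>x / lam\<rfloor>) ` {0..}))"
    by (simp add: image_image)
  also have "(\<lambda>x. nat \<lfloor>x / lam\<rfloor>) ` {0..} = UNIV"
  proof (intro set_eqI iffI)
    fix s :: nat
    have "nat \<lfloor>(lam * real s) / lam\<rfloor> = s" using lam by simp
    moreover have "lam * real s \<in> {0..}" using lam by simp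
    ultimately show "s \<in> (\<lambda>x. nat \<lfloor>x / lam\<rfloor>) ` {0..}" by (metis image_eqI)
  qed auto
  finally show ?thesis by simp
qed

lemma Lim_ev_const:
  assumes "eventually (\<lambda>x. f x = c) (at_right (0::real))"
  shows "Lim (at_right 0) f = (c :: ereal)"
  by (rule tendsto_Lim) (auto intro: tendsto_eventually[OF assms])

lemma tau_star_eq:
  assumes W: "\<forall>j<n. win mu K j" and K: "K > 0" and n: "n \<ge> 1" and wp: "\<forall>j<n. w j > 0"
  shows "tau_star n mu w = (SUP s. DD n mu s)"
proof -
  define m where "m = Min (w ` {..<n})"
  have fin: "finite (w ` {..<n})" "w ` {..<n} \<noteq> {}" using n by (auto simp: lessThan_empty_iff)
  have mpos: "m > 0" unfolding m_def using Min_gr_iff[OF fin] wp by auto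
  have mle: "m \<le> w j" if "j < n" for j unfolding m_def using that fin by (intro Min_le) auto
  have nK: "real (n * K) > 0" using n K by simp
  define b where "b = m / real (n * K)"
  have bpos: "b > 0" unfolding b_def using mpos nK by simp
  have "eventually (\<lambda>lam. tau_lam n mu w lam = (SUP s. DD n mu s)) (at_right 0)"
    unfolding eventually_at_right_field
  proof (intro exI[of _ b] conjI allI impI)
    show "b > 0" by (rule bpos)
    fix lam :: real assume l: "0 < lam" "lam < b"
    have "lam * real (n * K) \<le> w j" if "j < n" for j
    proof -
      have "lam * real (n * K) \<le> b * real (n * K)" using l nK by (intro mult_right_mono) auto
      also have "\<dots> = m" unfolding b_def using nK by (simp add: field_simps del: of_nat_mult)
      finally show ?thesis using mle[OF that] by simp
    qed
    then show "tau_lam n mu w lam = (SUP s. DD n mu s)"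
      using tau_lam_eq[OF W _ l(1) n] by blast
  qed
  then show ?thesis unfolding tau_star_def by (rule Lim_ev_const)
qed

lemma tau_star_inf:
  assumes nv: "\<forall>t. \<not> mu t j0" and "j0 < n" and wp: "\<forall>j<n. w j > 0"
  shows "tau_star n mu w = \<infinity>"
proof -
  have z: "cum mu w lam (n - 1) t = 0" for lam t
    using cum_zero[of mu j0 n w "n - 1 - j0" lam t] nv wp assms(2) by simp
  have "delay n mu w lam x = \<infinity>" if "x \<ge> 0" for lam x
  proof -
    have "\<not> (\<exists>t. x < cum mu w lam (n - 1) (Suc t))" using that z by (simp only: z) simp
    then show ?thesis unfolding delay_def by simp
  qed
  then have "tau_lam n mu w lam = \<infinity>" for lam
    unfolding tau_lam_def by (simp add: SUP_cong[OF refl, of "{0..}"])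
  then have "eventually (\<lambda>lam. tau_lam n mu w lam = \<infinity>) (at_right 0)" by simp
  then show ?thesis unfolding tau_star_def by (rule Lim_ev_const)
qed


lemma E_act: "\<forall>j<n. win mu K j \<Longrightarrow> j < n \<Longrightarrow> mu (E mu j s) j"
  by (cases j) (auto intro: nxt_props[THEN conjunct1])

lemma E_step: "\<forall>j<n. win mu K j \<Longrightarrow> Suc j < n \<Longrightarrow> E mu j s < E mu (Suc j) s"
  using nxt_props[of mu K "Suc j" "E mu j s"] by auto

lemma E_strict: "\<forall>j<n. win mu K j \<Longrightarrow> j < k \<Longrightarrow> k < n \<Longrightarrow> E mu j s < E mu k s"
proof (induction k)
  case 0 then show ?case by simp
next
  case (Suc k)
  have "E mu k s < E mu (Suc k) s" using E_step[OF Suc(2) Suc(4)] .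
  then show ?case using Suc by (cases "j = k") auto
qed

lemma E_mono: "\<forall>j<n. win mu K j \<Longrightarrow> j < n \<Longrightarrow> s \<le> s' \<Longrightarrow> E mu j s \<le> E mu j s'"
proof (induction j)
  case 0 then show ?case using nxt_mono[of mu K 0 s s'] by auto
next
  case (Suc j)
  then show ?case using nxt_mono[of mu K "Suc j" "E mu j s" "E mu j s'"] by auto
qed

lemma E_prop:
  assumes "E mu j s = E mu j s'" "j \<le> k"
  shows "E mu k s = E mu k s'"
  using assms(2)
proof (induction k rule: dec_induct)
  case base then show ?case using assms(1) .
next
  case (step k) then show ?case by simp
qed

lemma lower_bound:
  assumes W: "\<forall>j<n. win mu K j" and adm: "admissible n phi mu" and n: "n \<ge> 1" and ph: "phi \<le> n - 1"
  shows "\<exists>s. ereal (real (n + phi)) \<le> DD n mu s"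
proof -
  have n1: "n - 1 < n" using n by simp
  have "\<exists>m. E mu (n - 1) m < E mu (n - 1) (Suc m)"
  proof (rule ccontr)
    assume "\<not> ?thesis"
    then have eq: "E mu (n - 1) (Suc m) = E mu (n - 1) m" for m
      using E_mono[OF W n1, of m "Suc m"] by (metis le_SucI le_refl le_neq_implies_less)
    have "E mu (n - 1) m = E mu (n - 1) 0" for m by (induction m) (use eq in auto)
    moreover have "E mu (n - 1) 0 < E mu (n - 1) (E mu (n - 1) 0)"
      using E_bound[OF W n1, of "E mu (n - 1) 0"] by simp
    ultimately show False by (metis less_irrefl)
  qed
  then obtain m where m: "E mu (n - 1) m < E mu (n - 1) (Suc m)" by blast
  define c where "c j = E mu j m" for j
  define b where "b j = E mu j (Suc m)" for j
  have nm: "c j < b j" if "j < n" for j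
  proof -
    have "c j \<le> b j" unfolding c_def b_def using E_mono[OF W that, of m "Suc m"] by simp
    moreover have "c j \<noteq> b j"
    proof
      assume "c j = b j"
      then have "E mu (n - 1) m = E mu (n - 1) (Suc m)" unfolding c_def b_def
        by (rule E_prop) (use that in simp)
      then show False using m by simp
    qed
    ultimately show ?thesis by simp
  qed
  have w0: "win mu K 0" using W n by auto
  have c0: "c 0 = Suc m"
  proof (rule ccontr)
    assume ne: "c 0 \<noteq> Suc m"
    have p: "mu (c 0) 0 \<and> m < c 0" using nxt_props[OF w0, of m] unfolding c_def by simp
    then have "Suc m < c 0" using ne by simp
    then have "b 0 \<le> c 0" unfolding b_def using p by (simp add: nxt_le c_def)
    then show False using nm[of 0] n by simp
  qed
  have cinj: "inj_on c {..phi}" unfolding c_def inj_on_def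
  proof (intro ballI impI)
    fix x y assume xy: "x \<in> {..phi}" "y \<in> {..phi}" "E mu x m = E mu y m"
    then have "x < n" "y < n" using ph n by auto
    then show "x = y" using xy(3) E_strict[OF W, of x y m] E_strict[OF W, of y x m]
      by (metis less_irrefl nat_neq_iff)
  qed
  have binj: "inj_on b {..<n}" unfolding b_def inj_on_def
  proof (intro ballI impI)
    fix x y assume xy: "x \<in> {..<n}" "y \<in> {..<n}" "E mu x (Suc m) = E mu y (Suc m)"
    then show "x = y" using xy(3) E_strict[OF W, of x y "Suc m"] E_strict[OF W, of y x "Suc m"]
      by (metis lessThan_iff less_irrefl nat_neq_iff)
  qed
  have disj: "c ` {..phi} \<inter> b ` {..<n} = {}"
  proof (rule ccontr)
    assume "\<not> ?thesis"
    then obtain j i where ji: "j \<le> phi" "i < n" "c j = b i" by auto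
    have jn: "j < n" using ji ph n by simp
    have a1: "mu (c j) j" unfolding c_def by (rule E_act[OF W jn])
    have a2: "mu (b i) i" unfolding b_def by (rule E_act[OF W ji(2)])
    consider "i = j" | "j < i" | "i < j" by linarith
    then show False
    proof cases
      case 1 then show ?thesis using nm[OF jn] ji by simp
    next
      case 2
      then have "b j < b i" unfolding b_def using E_strict[OF W 2 ji(2)] by simp
      then show ?thesis using nm[OF jn] ji by simp
    next
      case 3
      have "j \<le> i + phi" "i \<le> j + phi" "j \<noteq> i" using 3 ji by auto
      then have "\<not> (mu (c j) j \<and> mu (c j) i)"
        using adm jn ji(2) unfolding admissible_def by blast
      then show ?thesis using a1 a2 ji(3) by simp
    qed
  qed
  have sub: "c ` {..phi} \<union> b ` {..<n} \<subseteq> {Suc m..b (n - 1)}"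
  proof -
    have "Suc m \<le> c j \<and> c j \<le> b (n - 1)" if "j \<le> phi" for j
    proof -
      have jn: "j < n" using that ph n by simp
      have "c 0 \<le> c j" unfolding c_def using E_strict[OF W _ jn, of 0 m] by (cases "j = 0") auto
      moreover have "b j \<le> b (n - 1)" unfolding b_def
        using E_strict[OF W _ n1, of j "Suc m"] le_neq_implies_less[of j "n - 1"] jn
        by (cases "j = n - 1") (auto simp del: One_nat_def)
      ultimately show ?thesis using c0 nm[OF jn] by simp
    qed
    moreover have "Suc m \<le> b i \<and> b i \<le> b (n - 1)" if "i < n" for i
    proof -
      have "c i < b i" using nm[OF that] .
      moreover have "c 0 \<le> c i" unfolding c_def using E_strict[OF W _ that, of 0 m] by (cases "i = 0") auto
      moreover have "b i \<le> b (n - 1)" unfolding b_def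
        using E_strict[OF W _ n1, of i "Suc m"] le_neq_implies_less[of i "n - 1"] that
        by (cases "i = n - 1") (auto simp del: One_nat_def)
      ultimately show ?thesis using c0 by simp
    qed
    ultimately show ?thesis by auto
  qed
  have "card (c ` {..phi} \<union> b ` {..<n}) = Suc phi + n"
    using card_Un_disjoint[OF _ _ disj] card_image[OF cinj] card_image[OF binj] by simp
  moreover have "card (c ` {..phi} \<union> b ` {..<n}) \<le> card {Suc m..b (n - 1)}"
    by (rule card_mono[OF _ sub]) simp
  ultimately have "Suc phi + n \<le> Suc (b (n - 1)) - Suc m" by simp
  then have "real (n + phi) \<le> real (E mu (n - 1) (Suc m)) - real (Suc m)"
    unfolding b_def by linarith
  then show ?thesis unfolding DD_def by (intro exI[of _ "Suc m"]) simp
qed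




lemma ORR_adm_aux:
  fixes j j' p :: nat
  assumes "j < j'" "j' \<le> j + phi" "j mod (phi + 1) = j' mod (phi + 1)"
  shows False
proof -
  have "(phi + 1) dvd (j' - j)" using assms(1,3) mod_eq_dvd_iff_nat[of j j' "phi+1"] by simp
  moreover have "0 < j' - j" using assms(1) by simp
  moreover have "j' - j < phi + 1" using assms(2) by simp
  ultimately show False using nat_dvd_not_less by blast
qed

lemma ORR_adm: "admissible n phi (ORR n phi)"
  unfolding admissible_def
proof (intro conjI allI impI)
  fix t j assume "ORR n phi t j" then show "j < n" unfolding ORR_def by simp
next
  fix t j j' assume h: "j < n" "j' < n" "j \<noteq> j'" "j \<le> j' + phi \<and> j' \<le> j + phi"
  show "\<not> (ORR n phi t j \<and> ORR n phi t j')"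
  proof
    assume "ORR n phi t j \<and> ORR n phi t j'"
    then have e: "j mod (phi + 1) = j' mod (phi + 1)" unfolding ORR_def by simp
    show False
    proof (cases "j < j'")
      case True then show False using ORR_adm_aux[of j j' phi] h e by simp
    next
      case False
      then have "j' < j" using h(3) by simp
      then show False using ORR_adm_aux[of j' j phi] h e by simp
    qed
  qed
qed

lemma ORR_cyc: "cyclic (ORR n phi) (phi + 1)"
proof -
  have "\<And>t. (t + (phi + 1)) mod (phi + 1) = t mod (phi + 1)" by (rule mod_add_self2)
  then show ?thesis unfolding cyclic_def ORR_def by (simp only: fun_eq_iff) simp
qed

lemma ORR_win: "\<forall>j<n. win (ORR n phi) (phi + 1) j"
proof (intro allI impI)
  fix j assume "j < n"
  then show "win (ORR n phi) (phi + 1) j"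
    by (intro win_from_cyclic[OF ORR_cyc, of "j mod (phi + 1)"]) (auto simp: ORR_def)
qed

lemma next_mult:
  fixes p s y :: nat
  assumes p: "0 < p" and y: "y mod p = 0" and sy: "s < y"
  shows "(s div p + 1) * p \<le> y"
proof -
  have yeq: "y div p * p = y" using y div_mult_mod_eq[of y p] by linarith
  have sle: "s div p * p \<le> s" by (rule div_times_less_eq_dividend)
  have lt: "s div p < y div p"
  proof (rule ccontr)
    assume "\<not> s div p < y div p"
    then have "y div p \<le> s div p" by linarith
    then have "y div p * p \<le> s div p * p" by (rule mult_le_mono1)
    then show False using yeq sle sy by linarith
  qed
  then have "s div p + 1 \<le> y div p" by linarith
  then have "(s div p + 1) * p \<le> y div p * p" by (rule mult_le_mono1)
  then show ?thesis using yeq by linarith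
qed

lemma ORR_nxt0:
  assumes "0 < n"
  shows "nxt (ORR n phi) 0 s = (s div (phi + 1) + 1) * (phi + 1)"
  unfolding nxt_def
proof (rule Least_equality)
  show "ORR n phi ((s div (phi + 1) + 1) * (phi + 1)) 0 \<and> s < (s div (phi + 1) + 1) * (phi + 1)"
  proof
    have "((s div (phi + 1) + 1) * (phi + 1)) mod (phi + 1) = 0" by (rule mod_mult_self2_is_0)
    then show "ORR n phi ((s div (phi + 1) + 1) * (phi + 1)) 0" using assms unfolding ORR_def by simp
    have "s = s div (phi + 1) * (phi + 1) + s mod (phi + 1)" by (rule div_mult_mod_eq[symmetric])
    moreover have "s mod (phi + 1) < phi + 1" by simp
    moreover have "(s div (phi + 1) + 1) * (phi + 1) = s div (phi + 1) * (phi + 1) + (phi + 1)"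
      by (simp only: add_mult_distrib mult_1)
    ultimately show "s < (s div (phi + 1) + 1) * (phi + 1)" by linarith
  qed
next
  fix y assume "ORR n phi y 0 \<and> s < y"
  then have y: "y mod (phi + 1) = 0" "s < y" unfolding ORR_def by auto
  show "(s div (phi + 1) + 1) * (phi + 1) \<le> y" by (rule next_mult[OF _ y]) simp
qed

lemma ORR_E:
  assumes "j < n"
  shows "E (ORR n phi) j s = (s div (phi + 1) + 1) * (phi + 1) + j"
  using assms
proof (induction j)
  case 0 then show ?case using ORR_nxt0[of n phi s] by simp
next
  case (Suc j)
  define t0 where "t0 = (s div (phi + 1) + 1) * (phi + 1)"
  have IH: "E (ORR n phi) j s = t0 + j" using Suc unfolding t0_def by simp
  have t0m: "t0 mod (phi + 1) = 0" unfolding t0_def by (rule mod_mult_self2_is_0)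
  have "nxt (ORR n phi) (Suc j) (t0 + j) = t0 + Suc j"
    unfolding nxt_def
  proof (rule Least_equality)
    have "(t0 + Suc j) mod (phi + 1) = (t0 mod (phi + 1) + Suc j) mod (phi + 1)"
      by (rule mod_add_left_eq[symmetric])
    then have "(t0 + Suc j) mod (phi + 1) = Suc j mod (phi + 1)" using t0m by simp
    then show "ORR n phi (t0 + Suc j) (Suc j) \<and> t0 + j < t0 + Suc j"
      using Suc.prems unfolding ORR_def by simp
  next
    fix y assume "ORR n phi y (Suc j) \<and> t0 + j < y"
    then show "t0 + Suc j \<le> y" by simp
  qed
  then show ?case using IH by (simp add: t0_def)
qed


lemma ORR_DD:
  assumes "n \<ge> 1"
  shows "DD n (ORR n phi) s \<le> ereal (real (n + phi))" and "DD n (ORR n phi) 0 = ereal (real (n + phi))"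
proof -
  have E: "E (ORR n phi) (n - 1) s = (s div (phi + 1) + 1) * (phi + 1) + (n - 1)" for s
    using ORR_E[of "n - 1" n phi s] assms by simp
  have "s div (phi + 1) * (phi + 1) \<le> s" by (rule div_times_less_eq_dividend)
  moreover have "(s div (phi + 1) + 1) * (phi + 1) = s div (phi + 1) * (phi + 1) + (phi + 1)"
    by (simp only: add_mult_distrib mult_1)
  ultimately have "E (ORR n phi) (n - 1) s \<le> s + (n + phi)" unfolding E using assms by linarith
  then have "real (E (ORR n phi) (n - 1) s) \<le> real s + real (n + phi)" by linarith
  then show "DD n (ORR n phi) s \<le> ereal (real (n + phi))"
    unfolding DD_def by simp
  show "DD n (ORR n phi) 0 = ereal (real (n + phi))"
    unfolding DD_def E using assms by simp
qed

lemma ORR_tau: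
  assumes "n \<ge> 1" "\<forall>j<n. w j > 0"
  shows "tau_star n (ORR n phi) w = ereal (real (n + phi))"
proof -
  have "tau_star n (ORR n phi) w = (SUP s. DD n (ORR n phi) s)"
    by (rule tau_star_eq[OF ORR_win _ assms(1) assms(2)]) simp
  also have "\<dots> = ereal (real (n + phi))"
  proof (rule antisym)
    show "(SUP s. DD n (ORR n phi) s) \<le> ereal (real (n + phi))"
      by (rule SUP_least) (use ORR_DD(1)[OF assms(1)] in auto)
    show "ereal (real (n + phi)) \<le> (SUP s. DD n (ORR n phi) s)"
      using ORR_DD(2)[OF assms(1), of phi] by (metis SUP_upper UNIV_I)
  qed
  finally show ?thesis .
qed

lemma other_tau:
  assumes adm: "admissible n phi mu" and cyc: "cyclic mu K" and n: "n \<ge> 1" and ph: "phi \<le> n - 1"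
    and wp: "\<forall>j<n. w j > 0"
  shows "ereal (real (n + phi)) \<le> tau_star n mu w"
proof (cases "\<forall>j<n. \<exists>t<K. mu t j")
  case True
  have W: "\<forall>j<n. win mu K j" using True win_from_cyclic[OF cyc] by blast
  have K: "K > 0" using cyc by (simp add: cyclic_def)
  obtain s where s: "ereal (real (n + phi)) \<le> DD n mu s" using lower_bound[OF W adm n ph] by blast
  have "DD n mu s \<le> (SUP s. DD n mu s)" by (rule SUP_upper) simp
  then show ?thesis using s tau_star_eq[OF W K n wp] by simp
next
  case False
  then obtain j0 where "j0 < n" "\<forall>t<K. \<not> mu t j0" by auto
  then have "tau_star n mu w = \<infinity>"
    using never_from_cyclic[OF cyc] tau_star_inf[of mu j0 n w] wp by blast
  then show ?thesis by simp
qed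

lemma ORR_rate:
  assumes "e < n"
  shows "rate (ORR n phi) (phi + 1) e = 1 / real (phi + 1)"
proof -
  have "(\<Sum>t<phi + 1. if ORR n phi t e then 1 else 0 :: real) = (\<Sum>t<phi + 1. if t = e mod (phi + 1) then 1 else 0)"
  proof (rule sum.cong)
    fix t assume "t \<in> {..<phi + 1}"
    then have "t mod (phi + 1) = t" by simp
    then show "(if ORR n phi t e then 1 else 0 :: real) = (if t = e mod (phi + 1) then 1 else 0)"
      using assms unfolding ORR_def by auto
  qed simp
  also have "\<dots> = 1"
  proof -
    have "e mod (phi + 1) \<in> {..<phi + 1}" by simp
    then show ?thesis by (subst sum.delta) auto
  qed
  finally show ?thesis unfolding rate_def by simp
qed

theorem theorem3:
  fixes n phi :: nat and w :: "nat \<Rightarrow> real"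
  assumes "n \<ge> 1" and "phi \<le> n - 1" and "\<forall>j<n. w j > 0"
  shows "admissible n phi (ORR n phi) \<and> cyclic (ORR n phi) (phi + 1)
    \<and> deadline_optimal n phi w (ORR n phi)
    \<and> tau_star n (ORR n phi) w = ereal (real (n + phi))
    \<and> (\<forall>e<n. rate (ORR n phi) (phi + 1) e = 1 / real (phi + 1))"
proof (intro conjI)
  show "admissible n phi (ORR n phi)" by (rule ORR_adm)
  show "cyclic (ORR n phi) (phi + 1)" by (rule ORR_cyc)
  show T: "tau_star n (ORR n phi) w = ereal (real (n + phi))" by (rule ORR_tau[OF assms(1,3)])
  show "deadline_optimal n phi w (ORR n phi)"
    unfolding deadline_optimal_def
  proof (intro allI impI)
    fix mu' K' assume h: "admissible n phi mu' \<and> cyclic mu' K'"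
    show "tau_star n (ORR n phi) w \<le> tau_star n mu' w"
      unfolding T using other_tau[OF conjunct1[OF h] conjunct2[OF h] assms(1,2,3)] .
  qed
  show "\<forall>e<n. rate (ORR n phi) (phi + 1) e = 1 / real (phi + 1)"
    using ORR_rate by blast
qed

end
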